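(* Let $s\in\{+1,-1\}$ and $N\ge1$. Let $f:H_N\to\mathbb R$ be nonzero with $\sum_{x\in H_N}f(x)\le0$ and $sf(\mathbf 1)\le0$. Then $$\#\{x\in H_N: f(x)<0\}\cdot\#\{S\subseteq[N]: s\widehat f(S)<0\}\ \ge\ 2^{N-4}.$$ In particular, if there are integers $r,k\ge1$ with $f(x)\ge0$ whenever $d_H(x,\mathbf 1)\ge r$ and $s\widehat f(S)\ge0$ whenever $\#S\ge k$, then $$\sum_{n=1}^{r}\binom{N}{n-1}\cdot\sum_{n=1}^{k}\binom{N}{n-1}\ \ge\ 2^{N-4}.$$
   Context: $H_N=\{-1,1\}^N$, $[N]=\{1,\dots,N\}$, $\mathbf 1=(1,\dots,1)$, and $d_H(x,y)=\#\{n\in[N]: x_n\neq y_n\}$ is the Hamming distance. For $S\subseteq[N]$, $\varphi_S(x)=\prod_{i\in S}x_i$ (with $\varphi_\emptyset\equiv1$), and $\widehat f(S)=2^{-N}\sum_{x\in H_N}f(x)\varphi_S(x)$, so that $f=\sum_S\widehat f(S)\varphi_S$. *)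

theory Defs
  imports Complex_Main "HOL-Library.FuncSet"
begin

definition hcube :: "nat \<Rightarrow> (nat \<Rightarrow> real) set" where
  "hcube N = ({1..N} \<rightarrow>\<^sub>E {-1, 1})"

definition ones :: "nat \<Rightarrow> (nat \<Rightarrow> real)" where
  "ones N = restrict (\<lambda>_. 1) {1..N}"

definition hamming :: "nat \<Rightarrow> (nat \<Rightarrow> real) \<Rightarrow> (nat \<Rightarrow> real) \<Rightarrow> nat" where
  "hamming N x y = card {n \<in> {1..N}. x n \<noteq> y n}"

definition walsh :: "nat set \<Rightarrow> (nat \<Rightarrow> real) \<Rightarrow> real" where
  "walsh S x = (\<Prod>i\<in>S. x i)"

definition fourier :: "nat \<Rightarrow> ((nat \<Rightarrow> real) \<Rightarrow> real) \<Rightarrow> nat set \<Rightarrow> real" where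
  "fourier N f S = (\<Sum>x\<in>hcube N. f x * walsh S x) / 2 ^ N"

end

theory Submission
  imports Defs
begin

lemma hcube_val: "x \<in> hcube N \<Longrightarrow> i \<in> {1..N} \<Longrightarrow> x i = 1 \<or> x i = -1"
  unfolding hcube_def by (auto simp: PiE_def Pi_def)

lemma hcube_ext: "x \<in> hcube N \<Longrightarrow> i \<notin> {1..N} \<Longrightarrow> x i = undefined"
  unfolding hcube_def by (auto simp: PiE_def extensional_def)

lemma finite_hcube: "finite (hcube N)"
  unfolding hcube_def by (intro finite_PiE) auto

lemma ones_in: "ones N \<in> hcube N"
  unfolding hcube_def ones_def by auto

lemma walsh_abs: "x \<in> hcube N \<Longrightarrow> S \<subseteq> {1..N} \<Longrightarrow> \<bar>walsh S x\<bar> = 1"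
proof -
  assume x: "x \<in> hcube N" and S: "S \<subseteq> {1..N}"
  have "\<bar>walsh S x\<bar> = (\<Prod>i\<in>S. \<bar>x i\<bar>)" unfolding walsh_def by (simp add: abs_prod)
  also have "\<dots> = (\<Prod>i\<in>S. 1)"
  proof (rule prod.cong)
    fix i assume "i \<in> S"
    then have "i \<in> {1..N}" using S by auto
    then show "\<bar>x i\<bar> = 1" using hcube_val[OF x] by fastforce
  qed simp
  finally show ?thesis by simp
qed

lemma orth:
  assumes x: "x \<in> hcube N" and y: "y \<in> hcube N"
  shows "(\<Sum>S\<in>Pow {1..N}. walsh S x * walsh S y) = (if x = y then 2 ^ N else 0)"
proof -
  have "(\<Sum>S\<in>Pow {1..N}. walsh S x * walsh S y)
      = (\<Sum>S\<in>Pow {1..N}. (\<Prod>i\<in>S. x i * y i) * (\<Prod>i\<in>{1..N}-S. 1))"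
    unfolding walsh_def by (simp only: prod.distrib prod.neutral_const mult_1_right)
  also have "\<dots> = (\<Prod>i\<in>{1..N}. x i * y i + 1)"
    by (subst prod_add) auto
  finally have eq: "(\<Sum>S\<in>Pow {1..N}. walsh S x * walsh S y) = (\<Prod>i\<in>{1..N}. x i * y i + 1)" .
  show ?thesis
  proof (cases "x = y")
    case True
    have sq: "x i * y i + 1 = 2" if i: "i \<in> {1..N}" for i
      using hcube_val[OF x i] True by auto
    have "(\<Prod>i\<in>{1..N}. x i * y i + 1) = (\<Prod>i\<in>{1..N}. 2)"
      using sq by (intro prod.cong) auto
    then show ?thesis using eq True by simp
  next
    case False
    then obtain i where "x i \<noteq> y i" by auto
    have i: "i \<in> {1..N}"
    proof (rule ccontr)
      assume "i \<notin> {1..N}"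
      then have "x i = y i" using hcube_ext[OF x] hcube_ext[OF y] by simp
      then show False using \<open>x i \<noteq> y i\<close> by simp
    qed
    have "x i * y i + 1 = 0" using hcube_val[OF x i] hcube_val[OF y i] \<open>x i \<noteq> y i\<close> by auto
    then have "(\<Prod>i\<in>{1..N}. x i * y i + 1) = 0"
      using i by (intro prod_zero) auto
    then show ?thesis using eq False by simp
  qed
qed

lemma inversion:
  assumes y: "y \<in> hcube N"
  shows "(\<Sum>S\<in>Pow {1..N}. fourier N f S * walsh S y) = f y"
proof -
  have e: "fourier N f S * walsh S y = (\<Sum>x\<in>hcube N. f x * (walsh S x * walsh S y)) / 2 ^ N" for S
    unfolding fourier_def by (simp add: sum_distrib_right mult.assoc)
  have "(\<Sum>S\<in>Pow {1..N}. fourier N f S * walsh S y)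
      = (\<Sum>S\<in>Pow {1..N}. \<Sum>x\<in>hcube N. f x * (walsh S x * walsh S y)) / 2 ^ N"
    unfolding e by (rule sum_divide_distrib[symmetric])
  also have "\<dots> = (\<Sum>x\<in>hcube N. f x * (\<Sum>S\<in>Pow {1..N}. walsh S x * walsh S y)) / 2 ^ N"
    by (subst sum.swap) (simp add: sum_distrib_left)
  also have "\<dots> = (\<Sum>x\<in>hcube N. (if x = y then f y * 2 ^ N else 0)) / 2 ^ N"
    by (intro arg_cong[where f="\<lambda>t. t / 2 ^ N"] sum.cong refl) (subst orth[OF _ y], assumption, simp)
  also have "\<dots> = f y"
    using y finite_hcube by (simp add: sum.delta')
  finally show ?thesis .
qed

lemma count_subsets:
  "card {T. T \<subseteq> {1..N} \<and> card T < r} = (\<Sum>n=1..r. N choose (n - 1))"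
proof (induction r)
  case 0
  then show ?case by simp
next
  case (Suc r)
  have "{T. T \<subseteq> {1..N} \<and> card T < Suc r} = {T. T \<subseteq> {1..N} \<and> card T < r} \<union> {T. T \<subseteq> {1..N} \<and> card T = r}"
    by auto
  moreover have "card ({T. T \<subseteq> {1..N} \<and> card T < r} \<union> {T. T \<subseteq> {1..N} \<and> card T = r})
     = card {T. T \<subseteq> {1..N} \<and> card T < r} + card {T. T \<subseteq> {1..N} \<and> card T = r}"
    by (rule card_Un_disjoint) auto
  moreover have "card {T. T \<subseteq> {1..N} \<and> card T = r} = N choose r"
    using n_subsets[of "{1..N}" r] by simp
  ultimately show ?case using Suc by simp
qed

lemma walsh_ones: "S \<subseteq> {1..N} \<Longrightarrow> walsh S (ones N) = 1"
  unfolding walsh_def ones_def by (intro prod.neutral) auto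

lemma inj_g: "inj_on (\<lambda>x. {n\<in>{1..N}. x n \<noteq> 1}) (hcube N)"
proof (rule inj_onI)
  fix x y assume x: "x \<in> hcube N" and y: "y \<in> hcube N"
    and eq: "{n\<in>{1..N}. x n \<noteq> 1} = {n\<in>{1..N}. y n \<noteq> 1}"
  show "x = y"
  proof
    fix i show "x i = y i"
    proof (cases "i \<in> {1..N}")
      case True
      have "x i \<noteq> 1 \<longleftrightarrow> y i \<noteq> 1" using eq True by blast
      then show ?thesis using hcube_val[OF x True] hcube_val[OF y True] by auto
    next
      case False
      then show ?thesis using hcube_ext[OF x] hcube_ext[OF y] by simp
    qed
  qed
qed

lemma card_A_bound:
  fixes f :: "(nat \<Rightarrow> real) \<Rightarrow> real"
  assumes "\<forall>x\<in>hcube N. hamming N x (ones N) \<ge> r \<longrightarrow> f x \<ge> 0"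
  shows "card {x \<in> hcube N. f x < 0} \<le> (\<Sum>n=1..r. N choose (n - 1))"
proof -
  let ?g = "\<lambda>x. {n\<in>{1..N}. x n \<noteq> 1}"
  have "card {x \<in> hcube N. f x < 0} \<le> card {T. T \<subseteq> {1..N} \<and> card T < r}"
  proof (rule card_inj_on_le)
    show "inj_on ?g {x \<in> hcube N. f x < 0}" using inj_g by (rule inj_on_subset) auto
    show "finite {T. T \<subseteq> {1..N} \<and> card T < r}" by simp
    show "?g ` {x \<in> hcube N. f x < 0} \<subseteq> {T. T \<subseteq> {1..N} \<and> card T < r}"
    proof (rule image_subsetI)
      fix x assume "x \<in> {x \<in> hcube N. f x < 0}"
      then have x: "x \<in> hcube N" and fx: "f x < 0" by auto
      have "hamming N x (ones N) = card (?g x)"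
        unfolding hamming_def ones_def by (intro arg_cong[where f=card]) auto
      moreover have "\<not> r \<le> hamming N x (ones N)" using assms x fx by (meson not_le)
      ultimately show "?g x \<in> {T. T \<subseteq> {1..N} \<and> card T < r}" by auto
    qed
  qed
  then show ?thesis using count_subsets by simp
qed

lemma card_B_bound:
  assumes "\<forall>S. S \<subseteq> {1..N} \<longrightarrow> card S \<ge> k \<longrightarrow> s * fourier N f S \<ge> 0"
  shows "card {S. S \<subseteq> {1..N} \<and> s * fourier N f S < 0} \<le> (\<Sum>n=1..k. N choose (n - 1))"
proof -
  have "card {S. S \<subseteq> {1..N} \<and> s * fourier N f S < 0} \<le> card {T. T \<subseteq> {1..N} \<and> card T < k}"
  proof (rule card_mono)
    show "finite {T. T \<subseteq> {1..N} \<and> card T < k}" by simp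
    show "{S. S \<subseteq> {1..N} \<and> s * fourier N f S < 0} \<subseteq> {T. T \<subseteq> {1..N} \<and> card T < k}"
    proof
      fix S assume "S \<in> {S. S \<subseteq> {1..N} \<and> s * fourier N f S < 0}"
      then have S: "S \<subseteq> {1..N}" and neg: "s * fourier N f S < 0" by auto
      have "\<not> k \<le> card S"
      proof
        assume "k \<le> card S"
        then have "s * fourier N f S \<ge> 0" using assms S by blast
        then show False using neg by simp
      qed
      then show "S \<in> {T. T \<subseteq> {1..N} \<and> card T < k}" using S by simp
    qed
  qed
  then show ?thesis using count_subsets by simp
qed

lemma first_part:
  fixes N :: nat and s :: real and f :: "(nat \<Rightarrow> real) \<Rightarrow> real"
  assumes hs: "s \<in> {1, -1}"
    and hnz: "\<exists>x\<in>hcube N. f x \<noteq> 0"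
    and hsum: "(\<Sum>x\<in>hcube N. f x) \<le> 0"
    and hone: "s * f (ones N) \<le> 0"
  shows "2 ^ N \<le> 4 * real (card {x \<in> hcube N. f x < 0} * card {S. S \<subseteq> {1..N} \<and> s * fourier N f S < 0})"
proof -
  define H where "H = hcube N"
  define P where "P = Pow {1..N}"
  define A where "A = {x \<in> H. f x < 0}"
  define B where "B = {S \<in> P. s * fourier N f S < 0}"
  define L where "L = (\<Sum>x\<in>H. \<bar>f x\<bar>)"
  define M where "M = (\<Sum>S\<in>P. \<bar>fourier N f S\<bar>)"
  have fH: "finite H" unfolding H_def by (rule finite_hcube)
  have fP: "finite P" unfolding P_def by simp
  have abs_s: "\<bar>s\<bar> = 1" using hs by auto
  have c1: "\<bar>fourier N f S\<bar> \<le> L / 2 ^ N" if S: "S \<in> P" for S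
  proof -
    have "\<bar>\<Sum>x\<in>H. f x * walsh S x\<bar> \<le> (\<Sum>x\<in>H. \<bar>f x * walsh S x\<bar>)" by (rule sum_abs)
    also have "\<dots> = L" unfolding L_def
      using walsh_abs S unfolding H_def P_def by (intro sum.cong) (auto simp: abs_mult)
    finally show ?thesis unfolding fourier_def H_def by (simp add: divide_right_mono)
  qed
  have c2: "\<bar>f x\<bar> \<le> M" if x: "x \<in> H" for x
  proof -
    have "\<bar>f x\<bar> = \<bar>\<Sum>S\<in>P. fourier N f S * walsh S x\<bar>"
      using inversion x unfolding H_def P_def by simp
    also have "\<dots> \<le> (\<Sum>S\<in>P. \<bar>fourier N f S * walsh S x\<bar>)" by (rule sum_abs)
    also have "\<dots> = M" unfolding M_def
      using walsh_abs x unfolding H_def P_def by (intro sum.cong) (auto simp: abs_mult)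
    finally show ?thesis .
  qed
  have c3: "L \<le> 2 * (\<Sum>x\<in>A. \<bar>f x\<bar>)"
  proof -
    have "(\<Sum>x\<in>A. \<bar>f x\<bar>) = (\<Sum>x\<in>H. if f x < 0 then \<bar>f x\<bar> else 0)"
      unfolding A_def using fH by (rule sum.inter_filter)
    moreover have "(\<Sum>x\<in>H. f x) = (\<Sum>x\<in>H. \<bar>f x\<bar> - 2 * (if f x < 0 then \<bar>f x\<bar> else 0))"
      by (intro sum.cong) auto
    moreover have "(\<Sum>x\<in>H. \<bar>f x\<bar> - 2 * (if f x < 0 then \<bar>f x\<bar> else 0))
        = L - 2 * (\<Sum>x\<in>H. if f x < 0 then \<bar>f x\<bar> else 0)"
      unfolding L_def by (simp add: sum_subtractf sum_distrib_left)
    ultimately show ?thesis using hsum unfolding H_def by linarith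
  qed
  have c3': "(\<Sum>x\<in>A. \<bar>f x\<bar>) \<le> real (card A) * M"
    unfolding A_def by (rule sum_bounded_above) (use c2 in blast)
  have c4: "M \<le> 2 * (\<Sum>S\<in>B. \<bar>fourier N f S\<bar>)"
  proof -
    have "(\<Sum>S\<in>B. \<bar>fourier N f S\<bar>) = (\<Sum>S\<in>P. if s * fourier N f S < 0 then \<bar>fourier N f S\<bar> else 0)"
      unfolding B_def using fP by (rule sum.inter_filter)
    moreover have "(\<Sum>S\<in>P. s * fourier N f S) = (\<Sum>S\<in>P. \<bar>fourier N f S\<bar> - 2 * (if s * fourier N f S < 0 then \<bar>fourier N f S\<bar> else 0))"
    proof (rule sum.cong[OF refl])
      fix S
      show "s * fourier N f S = \<bar>fourier N f S\<bar> - 2 * (if s * fourier N f S < 0 then \<bar>fourier N f S\<bar> else 0)"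
      proof (cases "s = 1")
        case True then show ?thesis by auto
      next
        case False then have "s = -1" using hs by auto
        then show ?thesis by auto
      qed
    qed
    moreover have "(\<Sum>S\<in>P. \<bar>fourier N f S\<bar> - 2 * (if s * fourier N f S < 0 then \<bar>fourier N f S\<bar> else 0))
        = M - 2 * (\<Sum>S\<in>P. if s * fourier N f S < 0 then \<bar>fourier N f S\<bar> else 0)"
      unfolding M_def by (simp add: sum_subtractf sum_distrib_left)
    moreover have "(\<Sum>S\<in>P. s * fourier N f S) = s * f (ones N)"
    proof -
      have "(\<Sum>S\<in>P. s * fourier N f S) = s * (\<Sum>S\<in>P. fourier N f S * walsh S (ones N))"
        unfolding P_def by (simp add: sum_distrib_left walsh_ones)
      then show ?thesis using inversion[OF ones_in] unfolding P_def by simp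
    qed
    ultimately show ?thesis using hone by linarith
  qed
  have c4': "(\<Sum>S\<in>B. \<bar>fourier N f S\<bar>) \<le> real (card B) * (L / 2 ^ N)"
    unfolding B_def by (rule sum_bounded_above) (use c1 in blast)
  have Lpos: "L > 0"
  proof -
    obtain x where x: "x \<in> H" "f x \<noteq> 0" using hnz unfolding H_def by auto
    have "\<bar>f x\<bar> \<le> L" unfolding L_def using fH x by (intro member_le_sum) auto
    then show ?thesis using x by simp
  qed
  have Mge: "M \<ge> 0" unfolding M_def by (simp add: sum_nonneg)
  have "L \<le> 2 * (real (card A) * M)" using c3 c3' by linarith
  also have "\<dots> \<le> 2 * (real (card A) * (2 * (real (card B) * (L / 2 ^ N))))"
    using c4 c4' by (intro mult_left_mono) auto
  finally have "L * 2 ^ N \<le> 4 * (real (card A) * real (card B)) * L"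
    by (simp add: field_simps)
  then have "2 ^ N \<le> 4 * (real (card A) * real (card B))"
    using Lpos by (simp add: mult.commute)
  moreover have "B = {S. S \<subseteq> {1..N} \<and> s * fourier N f S < 0}" unfolding B_def P_def by auto
  ultimately show ?thesis unfolding A_def H_def by simp
qed

theorem mainTheorem17:
  fixes N :: nat and s :: real and f :: "(nat \<Rightarrow> real) \<Rightarrow> real"
  assumes hs: "s \<in> {1, -1}"
    and hN: "N \<ge> 1"
    and hnz: "\<exists>x\<in>hcube N. f x \<noteq> 0"
    and hsum: "(\<Sum>x\<in>hcube N. f x) \<le> 0"
    and hone: "s * f (ones N) \<le> 0"
  shows "real (card {x \<in> hcube N. f x < 0} * card {S. S \<subseteq> {1..N} \<and> s * fourier N f S < 0})
           \<ge> 2 powr (real N - 4)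
       \<and> (\<forall>r k :: nat. r \<ge> 1 \<longrightarrow> k \<ge> 1
            \<longrightarrow> (\<forall>x\<in>hcube N. hamming N x (ones N) \<ge> r \<longrightarrow> f x \<ge> 0)
            \<longrightarrow> (\<forall>S. S \<subseteq> {1..N} \<longrightarrow> card S \<ge> k \<longrightarrow> s * fourier N f S \<ge> 0)
            \<longrightarrow> real ((\<Sum>n=1..r. N choose (n - 1)) * (\<Sum>n=1..k. N choose (n - 1)))
                  \<ge> 2 powr (real N - 4))"
proof -
  have pw: "2 powr (real N - 4) = 2 ^ N / 16"
    by (simp add: powr_diff powr_realpow)
  have fp: "2 powr (real N - 4) \<le> real (card {x \<in> hcube N. f x < 0} * card {S. S \<subseteq> {1..N} \<and> s * fourier N f S < 0})"
  proof -
    have "2 ^ N \<le> 4 * real (card {x \<in> hcube N. f x < 0} * card {S. S \<subseteq> {1..N} \<and> s * fourier N f S < 0})"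
      by (rule first_part[OF hs hnz hsum hone])
    then show ?thesis unfolding pw by linarith
  qed
  show ?thesis
  proof (intro conjI allI impI)
    show "2 powr (real N - 4) \<le> real (card {x \<in> hcube N. f x < 0} * card {S. S \<subseteq> {1..N} \<and> s * fourier N f S < 0})"
      by (rule fp)
  next
    fix r k :: nat
    assume a: "\<forall>x\<in>hcube N. hamming N x (ones N) \<ge> r \<longrightarrow> f x \<ge> 0"
      and b: "\<forall>S. S \<subseteq> {1..N} \<longrightarrow> card S \<ge> k \<longrightarrow> s * fourier N f S \<ge> 0"
    have "card {x \<in> hcube N. f x < 0} * card {S. S \<subseteq> {1..N} \<and> s * fourier N f S < 0}
        \<le> (\<Sum>n=1..r. N choose (n - 1)) * (\<Sum>n=1..k. N choose (n - 1))"
      using card_A_bound[OF a] card_B_bound[OF b] by (rule mult_le_mono)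
    then show "2 powr (real N - 4) \<le> real ((\<Sum>n=1..r. N choose (n - 1)) * (\<Sum>n=1..k. N choose (n - 1)))"
      using fp by (meson of_nat_le_iff order_trans)
  qed
qed

end
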